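(* Let $(\mathcal{E},\mathcal{L},\mathcal{B})$ be a weakly left resolving labelled space whose accommodating family $\mathcal{B}$ is closed under relative complements, let $S$ be its associated inverse semigroup, and let $\xi$ be a filter in $E(S)$ with word $\alpha\in\mathcal{L}^{\le\infty}$. If $\xi_n$ is an ultrafilter in $\mathcal{B}_{\alpha_{1,n}}$ for some $n$ with $0<n\le|\alpha|$, then $\xi_m$ is an ultrafilter in $\mathcal{B}_{\alpha_{1,m}}$ for every $0<m<n$; if moreover $\xi_0\neq\emptyset$, then $\xi_0$ is an ultrafilter in $\mathcal{B}$.
   Context: A directed graph $\mathcal{E}=(\mathcal{E}^0,\mathcal{E}^1,r,s)$ has countable nonempty vertex set, edge set, range/source maps; paths satisfy $r(\lambda_i)=s(\lambda_{i+1})$. A labelled graph has a surjective labelling $\mathcal{L}:\mathcal{E}^1\to\mathcal{A}$ extended letterwise to finite and infinite paths. $\omega$ is the empty word, $\mathcal{L}^+=\bigcup_{n\ge1}\mathcal{L}(\mathcal{E}^n)$, $\mathcal{L}^*=\{\omega\}\cup\mathcal{L}^+$, $\mathcal{L}^\infty$ the labels of infinite paths, $\mathcal{L}^{\le\infty}=\mathcal{L}^*\cup\mathcal{L}^\infty$; $\alpha_{i,j}=\alpha_i\cdots\alpha_j$, $\alpha_{1,0}=\omega$. For $A\subseteq\mathcal{E}^0$, $\alpha\in\mathcal{L}^+$: $r(A,\alpha)=\{r(\lambda):\mathcal{L}(\lambda)=\alpha,\ s(\lambda)\in A\}$, $r(A,\omega)=A$, $r(\alpha)=r(\mathcal{E}^0,\alpha)$.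 $\mathcal{B}$ accommodating: closed under $r(\cdot,\alpha)$, finite intersections and unions, contains $r(\alpha)$ for $\alpha\in\mathcal{L}^+$; labelled space weakly left resolving if $r(A\cap B,\alpha)=r(A,\alpha)\cap r(B,\alpha)$ for $A,B\in\mathcal{B}$, $\alpha\in\mathcal{L}^+$. $\mathcal{B}_\alpha=\mathcal{B}\cap\mathcal{P}(r(\alpha))$, $\mathcal{B}_\omega=\mathcal{B}$. $S$ = triples $(\alpha,A,\beta)$, $\alpha,\beta\in\mathcal{L}^*$, $\emptyset\ne A\in\mathcal{B}_\alpha\cap\mathcal{B}_\beta$, plus $0$; product $(\alpha,A,\beta)(\gamma,B,\delta)=(\alpha\gamma',r(A,\gamma')\cap B,\delta)$ if $\gamma=\beta\gamma'$, $=(\alpha,A\cap r(B,\beta'),\delta\beta')$ if $\beta=\gamma\beta'$, $=0$ otherwise (empty middle entry identified with $0$). $E(S)=\{(\alpha,A,\alpha)\}\cup\{0\}$ with $p\le q$ iff $pq=p$. A filter in a poset with least element $0$ is a nonempty upward-closed subset not containing $0$ in which any two elements have a common lower bound in it; an ultrafilter is a maximal filter; filters in $\mathcal{B}_\alpha$ are under inclusion. The words of elements of a filter $\xi$ in $E(S)$ are pairwise comparable; the word of $\xi$ is the longest one if it exists ($\alpha\in\mathcal{L}^*$), and otherwise the unique $\alpha\in\mathcal{L}^\infty$ such that all elements of $\xi$ are of the form $(\alpha_{1,n},A,\alpha_{1,n})$. For $0\le n\le|\alpha|$ ($n$ finite), $\xi_n=\{A\in\mathcal{B}:(\alpha_{1,n},A,\alpha_{1,n})\in\xi\}$.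 *)

theory Defs
  imports Main "HOL-Library.Countable_Set" "HOL-Library.Extended_Nat"
begin

record ('v,'e,'a) lgraph =
  verts :: "'v set"
  edges :: "'e set"
  rng   :: "'e \<Rightarrow> 'v"
  src   :: "'e \<Rightarrow> 'v"
  lbl   :: "'e \<Rightarrow> 'a"  (* labelling; the alphabet is its image lbl ` edges *)

definition is_graph :: "('v,'e,'a) lgraph \<Rightarrow> bool" where
  "is_graph G \<longleftrightarrow> countable (verts G) \<and> verts G \<noteq> {} \<and> countable (edges G) \<and>
     (\<forall>e\<in>edges G. rng G e \<in> verts G \<and> src G e \<in> verts G)"

definition is_path :: "('v,'e,'a) lgraph \<Rightarrow> 'e list \<Rightarrow> bool" where
  "is_path G p \<longleftrightarrow> p \<noteq> [] \<and> set p \<subseteq> edges G \<and>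
     (\<forall>i. Suc i < length p \<longrightarrow> rng G (p ! i) = src G (p ! Suc i))"

definition Lplus :: "('v,'e,'a) lgraph \<Rightarrow> 'a list set" where
  "Lplus G = {map (lbl G) p | p. is_path G p}"

definition Lstar :: "('v,'e,'a) lgraph \<Rightarrow> 'a list set" where
  "Lstar G = insert [] (Lplus G)"

definition Linf :: "('v,'e,'a) lgraph \<Rightarrow> (nat \<Rightarrow> 'a) set" where
  "Linf G = {lbl G \<circ> p | p. (\<forall>i. p i \<in> edges G) \<and> (\<forall>i. rng G (p i) = src G (p (Suc i)))}"

definition rset :: "('v,'e,'a) lgraph \<Rightarrow> 'v set \<Rightarrow> 'a list \<Rightarrow> 'v set" where
  "rset G A w = (if w = [] then A else
      {rng G (last p) | p. is_path G p \<and> map (lbl G) p = w \<and> src G (hd p) \<in> A})"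

definition rword :: "('v,'e,'a) lgraph \<Rightarrow> 'a list \<Rightarrow> 'v set" where
  "rword G w = rset G (verts G) w"

definition accommodating :: "('v,'e,'a) lgraph \<Rightarrow> 'v set set \<Rightarrow> bool" where
  "accommodating G B \<longleftrightarrow> B \<subseteq> Pow (verts G) \<and>
     (\<forall>A\<in>B. \<forall>w\<in>Lplus G. rset G A w \<in> B) \<and>
     (\<forall>A\<in>B. \<forall>C\<in>B. A \<inter> C \<in> B \<and> A \<union> C \<in> B) \<and>
     (\<forall>w\<in>Lplus G. rword G w \<in> B)"

definition labelled_space :: "('v,'e,'a) lgraph \<Rightarrow> 'v set set \<Rightarrow> bool" where
  "labelled_space G B \<longleftrightarrow> is_graph G \<and> accommodating G B"

definition weakly_left_resolving :: "('v,'e,'a) lgraph \<Rightarrow> 'v set set \<Rightarrow> bool" where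
  "weakly_left_resolving G B \<longleftrightarrow>
     (\<forall>A\<in>B. \<forall>C\<in>B. \<forall>w\<in>Lplus G. rset G (A \<inter> C) w = rset G A w \<inter> rset G C w)"

definition closed_rel_compl :: "'v set set \<Rightarrow> bool" where
  "closed_rel_compl B \<longleftrightarrow> (\<forall>A\<in>B. \<forall>C\<in>B. A - C \<in> B)"

definition Bsub :: "('v,'e,'a) lgraph \<Rightarrow> 'v set set \<Rightarrow> 'a list \<Rightarrow> 'v set set" where
  "Bsub G B w = (if w = [] then B else B \<inter> Pow (rword G w))"

text \<open>Elements of S: None is 0, Some (alpha, A, beta) a triple.\<close>
type_synonym ('v,'a) selt = "('a list \<times> 'v set \<times> 'a list) option"

definition S_carrier :: "('v,'e,'a) lgraph \<Rightarrow> 'v set set \<Rightarrow> ('v,'a) selt set" where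
  "S_carrier G B = insert None
     {Some (a, A, b) | a A b. a \<in> Lstar G \<and> b \<in> Lstar G \<and> A \<noteq> {} \<and>
        A \<in> Bsub G B a \<and> A \<in> Bsub G B b}"

definition mkS :: "'a list \<Rightarrow> 'v set \<Rightarrow> 'a list \<Rightarrow> ('v,'a) selt" where
  "mkS a A b = (if A = {} then None else Some (a, A, b))"

fun S_mult :: "('v,'e,'a) lgraph \<Rightarrow> ('v,'a) selt \<Rightarrow> ('v,'a) selt \<Rightarrow> ('v,'a) selt" where
  "S_mult G (Some (a, A, b)) (Some (c, C, d)) =
     (if take (length b) c = b then
        (let c' = drop (length b) c in mkS (a @ c') (rset G A c' \<inter> C) d)
      else if take (length c) b = c then
        (let b' = drop (length c) b in mkS a (A \<inter> rset G C b') (d @ b'))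
      else None)"
| "S_mult G _ _ = None"

definition ES :: "('v,'e,'a) lgraph \<Rightarrow> 'v set set \<Rightarrow> ('v,'a) selt set" where
  "ES G B = {p \<in> S_carrier G B. p = None \<or> (\<exists>a A. p = Some (a, A, a))}"

definition ES_le :: "('v,'e,'a) lgraph \<Rightarrow> ('v,'a) selt \<Rightarrow> ('v,'a) selt \<Rightarrow> bool" where
  "ES_le G p q \<longleftrightarrow> S_mult G p q = p"

definition is_filter :: "'x set \<Rightarrow> ('x \<Rightarrow> 'x \<Rightarrow> bool) \<Rightarrow> 'x \<Rightarrow> 'x set \<Rightarrow> bool" where
  "is_filter P le z F \<longleftrightarrow> F \<subseteq> P \<and> F \<noteq> {} \<and> z \<notin> F \<and>
     (\<forall>x\<in>F. \<forall>y\<in>P. le x y \<longrightarrow> y \<in> F) \<and>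
     (\<forall>x\<in>F. \<forall>y\<in>F. \<exists>u\<in>F. le u x \<and> le u y)"

definition is_ultrafilter :: "'x set \<Rightarrow> ('x \<Rightarrow> 'x \<Rightarrow> bool) \<Rightarrow> 'x \<Rightarrow> 'x set \<Rightarrow> bool" where
  "is_ultrafilter P le z F \<longleftrightarrow> is_filter P le z F \<and>
     (\<forall>F'. is_filter P le z F' \<and> F \<subseteq> F' \<longrightarrow> F' = F)"

definition filter_ES :: "('v,'e,'a) lgraph \<Rightarrow> 'v set set \<Rightarrow> ('v,'a) selt set \<Rightarrow> bool" where
  "filter_ES G B \<xi> \<longleftrightarrow> is_filter (ES G B) (ES_le G) None \<xi>"

definition ultrafilter_B :: "('v,'e,'a) lgraph \<Rightarrow> 'v set set \<Rightarrow> 'a list \<Rightarrow> 'v set set \<Rightarrow> bool" where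
  "ultrafilter_B G B w F \<longleftrightarrow> is_ultrafilter (Bsub G B w) (\<subseteq>) {} F"

datatype 'a lword = Fin "'a list" | Inf "nat \<Rightarrow> 'a"

fun wlen :: "'a lword \<Rightarrow> enat" where
  "wlen (Fin xs) = enat (length xs)"
| "wlen (Inf f) = \<infinity>"

fun wprefix :: "'a lword \<Rightarrow> nat \<Rightarrow> 'a list" where
  "wprefix (Fin xs) n = take n xs"
| "wprefix (Inf f) n = map f [0..<n]"

definition elem_words :: "('v,'a) selt set \<Rightarrow> 'a list set" where
  "elem_words \<xi> = {a | a A b. Some (a, A, b) \<in> \<xi>}"

definition is_word_of :: "('v,'e,'a) lgraph \<Rightarrow> ('v,'a) selt set \<Rightarrow> 'a lword \<Rightarrow> bool" where
  "is_word_of G \<xi> w \<longleftrightarrow>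
     (if \<exists>a\<in>elem_words \<xi>. \<forall>b\<in>elem_words \<xi>. length b \<le> length a
      then w = Fin (THE a. a \<in> elem_words \<xi> \<and> (\<forall>b\<in>elem_words \<xi>. length b \<le> length a))
      else (\<exists>f. w = Inf f \<and> f \<in> Linf G \<and>
              (\<forall>p\<in>\<xi>. \<exists>n A. p = Some (map f [0..<n], A, map f [0..<n]))))"

definition xi_n :: "('v,'e,'a) lgraph \<Rightarrow> 'v set set \<Rightarrow> ('v,'a) selt set \<Rightarrow> 'a lword \<Rightarrow> nat \<Rightarrow> 'v set set" where
  "xi_n G B \<xi> w n = {A \<in> B. Some (wprefix w n, A, wprefix w n) \<in> \<xi>}"

end

theory Submission
  imports Defs
begin


lemma path_append:
  assumes "is_path G p" "is_path G q" "rng G (last p) = src G (hd q)"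
  shows "is_path G (p@q)"
  unfolding is_path_def
proof (intro conjI allI impI)
  show "p @ q \<noteq> []" using assms(1) by (simp add: is_path_def)
  show "set (p @ q) \<subseteq> edges G" using assms(1,2) by (auto simp: is_path_def)
  fix i assume i: "Suc i < length (p @ q)"
  have pp: "p \<noteq> []" "q \<noteq> []" using assms by (auto simp: is_path_def)
  consider "Suc i < length p" | "Suc i = length p" | "Suc i > length p" by linarith
  then show "rng G ((p @ q) ! i) = src G ((p @ q) ! Suc i)"
  proof cases
    case 1 then show ?thesis using assms(1) by (simp add: is_path_def nth_append)
  next
    case 2
    then have "i = length p - 1" by simp
    then have "(p@q)!i = last p" using pp 2 by (simp add: nth_append last_conv_nth)
    moreover have "(p@q)! Suc i = hd q" using 2 pp by (simp add: nth_append hd_conv_nth)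
    ultimately show ?thesis using assms(3) by simp
  next
    case 3
    then have "Suc (i - length p) < length q" using i by simp
    then have "rng G (q ! (i - length p)) = src G (q ! Suc (i - length p))"
      using assms(2) by (simp add: is_path_def)
    moreover have "Suc i - length p = Suc (i - length p)" using 3 by simp
    ultimately show ?thesis using 3 by (simp add: nth_append)
  qed
qed

lemma path_take: assumes "is_path G p" "0 < k" shows "is_path G (take k p)"
proof -
  have "p \<noteq> []" "set p \<subseteq> edges G" and c: "\<forall>i. Suc i < length p \<longrightarrow> rng G (p ! i) = src G (p ! Suc i)"
    using assms(1) unfolding is_path_def by auto
  moreover have "set (take k p) \<subseteq> set p" by (rule set_take_subset)
  ultimately show ?thesis unfolding is_path_def using assms(2) by auto
qed

lemma path_drop: assumes "is_path G p" "k < length p" shows "is_path G (drop k p)"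
proof -
  have "set p \<subseteq> edges G" and c: "\<forall>i. Suc i < length p \<longrightarrow> rng G (p ! i) = src G (p ! Suc i)"
    using assms(1) unfolding is_path_def by auto
  moreover have "set (drop k p) \<subseteq> set p" by (rule set_drop_subset)
  moreover have "rng G (drop k p ! i) = src G (drop k p ! Suc i)" if "Suc i < length (drop k p)" for i
  proof -
    have "Suc (k + i) < length p" using that by simp
    then have "rng G (p ! (k+i)) = src G (p ! Suc (k+i))" using c by blast
    then show ?thesis using assms(2) that by simp
  qed
  ultimately show ?thesis unfolding is_path_def using assms(2) by auto
qed

lemma Lplus_split:
  assumes "u @ v \<in> Lplus G"
  shows "(u \<noteq> [] \<longrightarrow> u \<in> Lplus G) \<and> (v \<noteq> [] \<longrightarrow> v \<in> Lplus G)"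
proof -
  obtain p where p: "is_path G p" "map (lbl G) p = u @ v" using assms by (auto simp: Lplus_def)
  have len: "length p = length u + length v" using p(2) by (metis length_append length_map)
  have m1: "map (lbl G) (take (length u) p) = u" using p(2) by (metis append_eq_conv_conj take_map)
  have m2: "map (lbl G) (drop (length u) p) = v" using p(2) by (metis append_eq_conv_conj drop_map)
  show ?thesis
  proof (intro conjI impI)
    assume "u \<noteq> []"
    then have "is_path G (take (length u) p)" using path_take[OF p(1)] by simp
    then show "u \<in> Lplus G" using m1 unfolding Lplus_def
      by (intro CollectI exI[of _ "take (length u) p"]) simp
  next
    assume "v \<noteq> []"
    then have "is_path G (drop (length u) p)" using path_drop[OF p(1)] len by simp
    then show "v \<in> Lplus G" using m2 unfolding Lplus_def
      by (intro CollectI exI[of _ "drop (length u) p"]) simp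
  qed
qed

lemma Lstar_split: "u @ v \<in> Lstar G \<Longrightarrow> u \<in> Lstar G \<and> v \<in> Lstar G"
  using Lplus_split[of u v G] by (auto simp: Lstar_def)

lemma rset_append_ne:
  assumes "b \<noteq> []" "c \<noteq> []"
  shows "rset G A (b @ c) = rset G (rset G A b) c"
proof
  show "rset G A (b @ c) \<subseteq> rset G (rset G A b) c"
  proof
    fix v assume "v \<in> rset G A (b @ c)"
    then obtain p where p: "v = rng G (last p)" "is_path G p" "map (lbl G) p = b @ c" "src G (hd p) \<in> A"
      using assms by (auto simp: rset_def)
    define p1 where "p1 = take (length b) p"
    define p2 where "p2 = drop (length b) p"
    have len: "length p = length b + length c" using p(3) by (metis length_append length_map)
    have m1: "map (lbl G) p1 = b" unfolding p1_def using p(3) by (metis append_eq_conv_conj take_map)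
    have m2: "map (lbl G) p2 = c" unfolding p2_def using p(3) by (metis append_eq_conv_conj drop_map)
    have lb: "0 < length b" "0 < length c" using assms by auto
    have pa1: "is_path G p1" unfolding p1_def using path_take[OF p(2)] lb by simp
    have pa2: "is_path G p2" unfolding p2_def using path_drop[OF p(2)] lb len by simp
    have h1: "hd p1 = hd p" unfolding p1_def using lb by (simp add: hd_take)
    have l2: "last p2 = last p" unfolding p2_def using lb len by simp
    have tne: "p1 \<noteq> []" "length p1 = length b" unfolding p1_def using lb len by auto
    have "last p1 = p ! (length b - 1)" using tne lb unfolding p1_def
      by (simp add: last_conv_nth)
    moreover have "hd p2 = p ! length b" unfolding p2_def using lb len by (simp add: hd_drop_conv_nth)
    moreover have "rng G (p ! (length b - 1)) = src G (p ! Suc (length b - 1))"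
      using p(2) lb len unfolding is_path_def by simp
    ultimately have "rng G (last p1) = src G (hd p2)" using lb by simp
    then have "\<exists>p'. src G (hd p2) = rng G (last p') \<and> is_path G p' \<and> map (lbl G) p' = b \<and> src G (hd p') \<in> A"
      using pa1 m1 h1 p(4) by (intro exI[of _ p1]) auto
    then have S: "src G (hd p2) \<in> rset G A b" using assms(1) unfolding rset_def by simp
    have "\<exists>p'. v = rng G (last p') \<and> is_path G p' \<and> map (lbl G) p' = c \<and> src G (hd p') \<in> rset G A b"
      using pa2 m2 l2 p(1) S by (intro exI[of _ p2]) auto
    then show "v \<in> rset G (rset G A b) c" using assms(2) unfolding rset_def by simp
  qed
next
  show "rset G (rset G A b) c \<subseteq> rset G A (b @ c)"
  proof
    fix v assume "v \<in> rset G (rset G A b) c"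
    then obtain q p where q: "v = rng G (last q)" "is_path G q" "map (lbl G) q = c"
      and p: "src G (hd q) = rng G (last p)" "is_path G p" "map (lbl G) p = b" "src G (hd p) \<in> A"
      using assms by (auto simp: rset_def)
    have ne: "p \<noteq> []" "q \<noteq> []" using p q unfolding is_path_def by auto
    have "is_path G (p @ q)" using path_append[OF p(2) q(2)] p(1) by simp
    moreover have "last (p@q) = last q" "hd (p@q) = hd p" using ne by auto
    ultimately have "\<exists>p'. v = rng G (last p') \<and> is_path G p' \<and> map (lbl G) p' = b @ c \<and> src G (hd p') \<in> A"
      using p q by (intro exI[of _ "p@q"]) auto
    then show "v \<in> rset G A (b @ c)" using assms unfolding rset_def by simp
  qed
qed

lemma rset_append: "rset G A (b @ c) = rset G (rset G A b) c"
  using rset_append_ne[of b c G A] by (cases "b = []"; cases "c = []") (auto simp: rset_def)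

lemma rset_mono: "A \<subseteq> C \<Longrightarrow> rset G A w \<subseteq> rset G C w"
  by (auto simp: rset_def)

lemma rset_Un: "rset G (A \<union> C) w = rset G A w \<union> rset G C w"
  by (auto simp: rset_def)

lemma rset_empty: "rset G {} w = {}"
  by (auto simp: rset_def)

lemma rword_append: "rword G (b @ c) = rset G (rword G b) c"
  unfolding rword_def by (rule rset_append)



lemma Bsub_iff: "labelled_space G B \<Longrightarrow> X \<in> Bsub G B w \<longleftrightarrow> X \<in> B \<and> X \<subseteq> rword G w"
  unfolding labelled_space_def accommodating_def Bsub_def rword_def rset_def by auto

lemma rset_Nil[simp]: "rset G A [] = A" by (simp add: rset_def)

lemma rset_B: "labelled_space G B \<Longrightarrow> A \<in> B \<Longrightarrow> w \<in> Lstar G \<Longrightarrow> rset G A w \<in> B"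
  unfolding labelled_space_def accommodating_def Lstar_def by auto

lemma rword_B: "labelled_space G B \<Longrightarrow> w \<in> Lplus G \<Longrightarrow> rword G w \<in> B"
  unfolding labelled_space_def accommodating_def by auto

lemma Int_B: "labelled_space G B \<Longrightarrow> A \<in> B \<Longrightarrow> C \<in> B \<Longrightarrow> A \<inter> C \<in> B"
  unfolding labelled_space_def accommodating_def by auto

lemma rset_Int: "weakly_left_resolving G B \<Longrightarrow> A \<in> B \<Longrightarrow> C \<in> B \<Longrightarrow> w \<in> Lstar G
   \<Longrightarrow> rset G (A \<inter> C) w = rset G A w \<inter> rset G C w"
  unfolding weakly_left_resolving_def Lstar_def by auto

lemma le_intro:
  assumes "C \<noteq> {}" "b = a @ y" "C \<subseteq> rset G A y"
  shows "ES_le G (Some (b, C, b)) (Some (a, A, a))"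
proof (cases "y = []")
  case True
  then have ba: "b = a" using assms(2) by simp
  have "C \<subseteq> A" using assms(3) True by simp
  then have CA: "rset G C [] \<inter> A = C" by auto
  have "S_mult G (Some (a, C, a)) (Some (a, A, a)) = mkS (a @ []) (rset G C [] \<inter> A) a"
    by (simp add: Let_def)
  also have "\<dots> = Some (a, C, a)" using CA assms(1) by (simp add: mkS_def)
  finally show ?thesis using ba by (simp add: ES_le_def)
next
  case False
  have l: "length a < length b" using assms(2) False by simp
  then have "take (length b) a = a" by simp
  then have n1: "take (length b) a \<noteq> b" using l by auto
  have t2: "take (length a) b = a" "drop (length a) b = y" using assms(2) by simp_all
  have CA: "C \<inter> rset G A y = C" using assms(3) by auto
  have "S_mult G (Some (b, C, b)) (Some (a, A, a)) = mkS b (C \<inter> rset G A y) (a @ y)"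
    using n1 t2 by (simp add: Let_def)
  also have "\<dots> = Some (b, C, b)" using CA assms(1,2) by (simp add: mkS_def)
  finally show ?thesis by (simp add: ES_le_def)
qed

lemma le_elim:
  assumes "ES_le G (Some (b, C, b)) (Some (a, A, a))"
  shows "\<exists>y. b = a @ y \<and> C \<subseteq> rset G A y"
proof (cases "take (length b) a = b")
  case True
  then have "mkS (b @ drop (length b) a) (rset G C (drop (length b) a) \<inter> A) a = Some (b, C, b)"
    using assms by (simp add: ES_le_def Let_def)
  then have "a = b" "C = rset G C (drop (length b) a) \<inter> A" by (auto simp: mkS_def split: if_splits)
  then show ?thesis by (intro exI[of _ "[]"]) (auto simp: rset_def)
next
  case False
  show ?thesis
  proof (cases "take (length a) b = a")
    case True
    then have "mkS b (C \<inter> rset G A (drop (length a) b)) (a @ drop (length a) b) = Some (b, C, b)"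
      using assms False by (simp add: ES_le_def Let_def)
    then have "C = C \<inter> rset G A (drop (length a) b)" by (auto simp: mkS_def split: if_splits)
    moreover have "b = a @ drop (length a) b" using True by (metis append_take_drop_id)
    ultimately show ?thesis by blast
  next
    case False2: False
    then show ?thesis using assms False by (simp add: ES_le_def)
  qed
qed

lemma elem:
  assumes "filter_ES G B \<xi>" "u \<in> \<xi>"
  shows "\<exists>c E. u = Some (c, E, c) \<and> c \<in> Lstar G \<and> E \<noteq> {} \<and> E \<in> Bsub G B c"
  using assms unfolding filter_ES_def is_filter_def ES_def S_carrier_def by blast

lemma elemS:
  assumes "filter_ES G B \<xi>" "Some (c, E, c) \<in> \<xi>"
  shows "c \<in> Lstar G \<and> E \<noteq> {} \<and> E \<in> Bsub G B c"
  using elem[OF assms] by auto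

lemma inES: "a \<in> Lstar G \<Longrightarrow> A \<noteq> {} \<Longrightarrow> A \<in> Bsub G B a \<Longrightarrow> Some (a, A, a) \<in> ES G B"
  unfolding ES_def S_carrier_def by blast

lemma up: "filter_ES G B \<xi> \<Longrightarrow> u \<in> \<xi> \<Longrightarrow> ES_le G u q \<Longrightarrow> q \<in> ES G B \<Longrightarrow> q \<in> \<xi>"
  unfolding filter_ES_def is_filter_def by blast

lemma lb: "filter_ES G B \<xi> \<Longrightarrow> p \<in> \<xi> \<Longrightarrow> q \<in> \<xi> \<Longrightarrow> \<exists>u\<in>\<xi>. ES_le G u p \<and> ES_le G u q"
  unfolding filter_ES_def is_filter_def by blast



lemma lemU:
  assumes ls: "labelled_space G B" and filt: "filter_ES G B \<xi>"
    and A: "Some (a @ x, A, a @ x) \<in> \<xi>" and D: "D \<in> Bsub G B a" and sub: "A \<subseteq> rset G D x"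
  shows "Some (a, D, a) \<in> \<xi>"
proof -
  have h: "a @ x \<in> Lstar G" "A \<noteq> {}" using elemS[OF filt A] by auto
  have aL: "a \<in> Lstar G" using Lstar_split[OF h(1)] by simp
  have "D \<noteq> {}" using sub h(2) rset_empty[of G x] by auto
  then have "Some (a, D, a) \<in> ES G B" using inES aL D by blast
  moreover have "ES_le G (Some (a @ x, A, a @ x)) (Some (a, D, a))"
    using le_intro[of A "a @ x" a x G D] h(2) sub by simp
  ultimately show ?thesis using up[OF filt A] by blast
qed

lemma lemK:
  assumes ls: "labelled_space G B" and wlr: "weakly_left_resolving G B" and filt: "filter_ES G B \<xi>"
    and D: "Some (a, D, a) \<in> \<xi>" and A: "Some (a @ x, A, a @ x) \<in> \<xi>"
  shows "Some (a @ x, rset G D x \<inter> A, a @ x) \<in> \<xi>"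
proof -
  obtain u where u: "u \<in> \<xi>" "ES_le G u (Some (a, D, a))" "ES_le G u (Some (a @ x, A, a @ x))"
    using lb[OF filt D A] by (elim bexE conjE)
  obtain c E where cE: "u = Some (c, E, c)" "c \<in> Lstar G" "E \<noteq> {}"
    using elem[OF filt u(1)] by (elim exE conjE)
  have l1: "ES_le G (Some (c, E, c)) (Some (a, D, a))" using u(2) cE(1) by simp
  have l2: "ES_le G (Some (c, E, c)) (Some (a @ x, A, a @ x))" using u(3) cE(1) by simp
  obtain y1 where y1: "c = a @ y1" "E \<subseteq> rset G D y1" using le_elim[OF l1] by (elim exE conjE)
  obtain y2 where y2: "c = (a @ x) @ y2" "E \<subseteq> rset G A y2" using le_elim[OF l2] by (elim exE conjE)
  have "y1 = x @ y2" using y1(1) y2(1) by simp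
  then have "rset G D y1 = rset G (rset G D x) y2" using rset_append[of G D x y2] by simp
  then have E1: "E \<subseteq> rset G (rset G D x) y2" using y1(2) by simp
  have hD: "D \<in> Bsub G B a" using elemS[OF filt D] by simp
  have hA: "A \<in> Bsub G B (a @ x)" "a @ x \<in> Lstar G" using elemS[OF filt A] by simp_all
  have DB: "D \<in> B" using hD Bsub_iff[OF ls] by simp
  have AB: "A \<in> B" "A \<subseteq> rword G (a @ x)" using hA(1) Bsub_iff[OF ls] by simp_all
  have xL: "x \<in> Lstar G" using Lstar_split[OF hA(2)] by simp
  have "(a @ x) @ y2 \<in> Lstar G" using cE(2) y2(1) by simp
  then have y2L: "y2 \<in> Lstar G" using Lstar_split[of "a @ x" y2 G] by simp
  have rB: "rset G D x \<in> B" using rset_B[OF ls DB xL] .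
  have Esub: "E \<subseteq> rset G (rset G D x \<inter> A) y2"
    using rset_Int[OF wlr rB AB(1) y2L] E1 y2(2) by simp
  have ZB0: "rset G D x \<inter> A \<in> B" using Int_B[OF ls rB AB(1)] .
  have "rset G D x \<inter> A \<subseteq> rword G (a @ x)" using AB(2) by auto
  then have ZB: "rset G D x \<inter> A \<in> Bsub G B (a @ x)" using ZB0 Bsub_iff[OF ls] by simp
  have "rset G D x \<inter> A \<noteq> {}"
  proof
    assume "rset G D x \<inter> A = {}"
    then have "E \<subseteq> {}" using Esub rset_empty[of G y2] by simp
    then show False using cE(3) by simp
  qed
  then have "Some (a @ x, rset G D x \<inter> A, a @ x) \<in> ES G B" using inES[OF hA(2) _ ZB] by simp
  moreover have "ES_le G u (Some (a @ x, rset G D x \<inter> A, a @ x))"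
    using le_intro[OF cE(3) y2(1) Esub] cE(1) by simp
  ultimately show ?thesis using up[OF filt u(1)] by simp
qed

lemma filterX:
  assumes ls: "labelled_space G B" and wlr: "weakly_left_resolving G B" and filt: "filter_ES G B \<xi>"
    and ne: "{A \<in> B. Some (a, A, a) \<in> \<xi>} \<noteq> {}"
  shows "is_filter (Bsub G B a) (\<subseteq>) {} {A \<in> B. Some (a, A, a) \<in> \<xi>}"
proof -
  define X where "X = {A \<in> B. Some (a, A, a) \<in> \<xi>}"
  have mem: "Z \<in> X \<longleftrightarrow> Z \<in> B \<and> Some (a, Z, a) \<in> \<xi>" for Z unfolding X_def by simp
  have "is_filter (Bsub G B a) (\<subseteq>) {} X"
    unfolding is_filter_def
  proof (intro conjI ballI impI)
    show "X \<subseteq> Bsub G B a"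
    proof
      fix Z assume "Z \<in> X" then show "Z \<in> Bsub G B a" using mem elemS[OF filt] by simp
    qed
    show "X \<noteq> {}" using ne unfolding X_def .
    show "{} \<notin> X"
    proof
      assume "{} \<in> X" then have "Some (a, {}, a) \<in> \<xi>" using mem by simp
      then show False using elemS[OF filt] by blast
    qed
  next
    fix Z Y assume Z: "Z \<in> X" and Y: "Y \<in> Bsub G B a" and XY: "Z \<subseteq> Y"
    have "Some (a @ [], Z, a @ []) \<in> \<xi>" using Z mem by simp
    moreover have "Z \<subseteq> rset G Y []" using XY by simp
    ultimately have "Some (a, Y, a) \<in> \<xi>" by (rule lemU[OF ls filt _ Y])
    moreover have "Y \<in> B" using Y Bsub_iff[OF ls] by simp
    ultimately show "Y \<in> X" using mem by simp
  next
    fix Z Y assume Z: "Z \<in> X" and Y: "Y \<in> X"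
    have z: "Some (a, Z, a) \<in> \<xi>" "Z \<in> B" using Z mem by simp_all
    have y: "Some (a @ [], Y, a @ []) \<in> \<xi>" "Y \<in> B" using Y mem by simp_all
    have "Some (a @ [], rset G Z [] \<inter> Y, a @ []) \<in> \<xi>" using lemK[OF ls wlr filt z(1) y(1)] .
    then have "Some (a, Z \<inter> Y, a) \<in> \<xi>" by simp
    moreover have "Z \<inter> Y \<in> B" using Int_B[OF ls z(2) y(2)] .
    ultimately have "Z \<inter> Y \<in> X" using mem by simp
    then show "\<exists>u\<in>X. u \<subseteq> Z \<and> u \<subseteq> Y" by (intro bexI[of _ "Z \<inter> Y"]) simp_all
  qed
  then show ?thesis unfolding X_def .
qed

lemma UF:
  assumes uf: "is_ultrafilter P (\<subseteq>) {} F" and Y: "Y \<in> P"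
    and cl: "\<forall>X\<in>P. \<forall>Z\<in>P. X \<inter> Z \<in> P" and meet: "\<forall>A\<in>F. Y \<inter> A \<noteq> {}"
  shows "Y \<in> F"
proof -
  have f: "is_filter P (\<subseteq>) {} F" using uf unfolding is_ultrafilter_def by simp
  define F2 where "F2 = {Z \<in> P. \<exists>A\<in>F. Y \<inter> A \<subseteq> Z}"
  have FP: "F \<subseteq> P" "F \<noteq> {}" using f unfolding is_filter_def by auto
  have dir: "\<forall>x\<in>F. \<forall>y\<in>F. \<exists>u\<in>F. u \<subseteq> x \<and> u \<subseteq> y" using f unfolding is_filter_def by simp
  have sub: "F \<subseteq> F2"
  proof
    fix A assume "A \<in> F" then show "A \<in> F2" unfolding F2_def using FP by auto
  qed
  have "is_filter P (\<subseteq>) {} F2"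
    unfolding is_filter_def
  proof (intro conjI ballI impI)
    show "F2 \<subseteq> P" unfolding F2_def by auto
    show "F2 \<noteq> {}" using FP sub by auto
    show "{} \<notin> F2"
    proof
      assume "{} \<in> F2"
      then obtain A where "A \<in> F" "Y \<inter> A \<subseteq> {}" unfolding F2_def by auto
      then show False using meet by auto
    qed
  next
    fix x y assume "x \<in> F2" "y \<in> P" "x \<subseteq> y" then show "y \<in> F2" unfolding F2_def by auto
  next
    fix x y assume x: "x \<in> F2" and y: "y \<in> F2"
    obtain A1 where A1: "A1 \<in> F" "Y \<inter> A1 \<subseteq> x" "x \<in> P" using x unfolding F2_def by auto
    obtain A2 where A2: "A2 \<in> F" "Y \<inter> A2 \<subseteq> y" "y \<in> P" using y unfolding F2_def by auto
    obtain u where u: "u \<in> F" "u \<subseteq> A1" "u \<subseteq> A2" using dir A1(1) A2(1) by blast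
    have "x \<inter> y \<in> P" using cl A1(3) A2(3) by blast
    moreover have "Y \<inter> u \<subseteq> x \<inter> y" using u A1(2) A2(2) by auto
    ultimately have "x \<inter> y \<in> F2" unfolding F2_def using u(1) by auto
    then show "\<exists>u\<in>F2. u \<subseteq> x \<and> u \<subseteq> y" by (intro bexI[of _ "x \<inter> y"]) simp_all
  qed
  then have "F2 = F" using uf sub unfolding is_ultrafilter_def by simp
  moreover have "Y \<in> F2" unfolding F2_def using Y FP by auto
  ultimately show ?thesis by simp
qed


lemma Bsub_Int: "labelled_space G B \<Longrightarrow> \<forall>X\<in>Bsub G B w. \<forall>Z\<in>Bsub G B w. X \<inter> Z \<in> Bsub G B w"
  using Bsub_iff[of G B _ w] Int_B[of G B] by blast

lemma core:
  assumes ls: "labelled_space G B" and wlr: "weakly_left_resolving G B"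
    and crc: "closed_rel_compl B" and filt: "filter_ES G B \<xi>"
    and uf: "is_ultrafilter (Bsub G B (a @ x)) (\<subseteq>) {} {A \<in> B. Some (a @ x, A, a @ x) \<in> \<xi>}"
    and ne: "{A \<in> B. Some (a, A, a) \<in> \<xi>} \<noteq> {}"
  shows "is_ultrafilter (Bsub G B a) (\<subseteq>) {} {A \<in> B. Some (a, A, a) \<in> \<xi>}"
proof -
  define X where "X = {A \<in> B. Some (a, A, a) \<in> \<xi>}"
  define Y where "Y = {A \<in> B. Some (a @ x, A, a @ x) \<in> \<xi>}"
  have fX: "is_filter (Bsub G B a) (\<subseteq>) {} X" unfolding X_def using filterX[OF ls wlr filt ne] .
  have fY: "is_filter (Bsub G B (a @ x)) (\<subseteq>) {} Y" using uf unfolding Y_def is_ultrafilter_def by simp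
  have ufY: "is_ultrafilter (Bsub G B (a @ x)) (\<subseteq>) {} Y" using uf unfolding Y_def .
  obtain A0 where A0: "A0 \<in> Y" using fY unfolding is_filter_def by auto
  have abL: "a @ x \<in> Lstar G" using A0 elemS[OF filt] unfolding Y_def by auto
  have xL: "x \<in> Lstar G" using Lstar_split[OF abL] by simp
  obtain E where EX: "E \<in> X" using ne unfolding X_def by auto
  have EB: "E \<in> B" "Some (a, E, a) \<in> \<xi>" using EX unfolding X_def by auto
  have Ea: "E \<subseteq> rword G a" using elemS[OF filt EB(2)] Bsub_iff[OF ls] by blast
  have max: "F' \<subseteq> X" if F': "is_filter (Bsub G B a) (\<subseteq>) {} F'" "X \<subseteq> F'" for F'
  proof
    fix D assume D: "D \<in> F'"
    have FP: "F' \<subseteq> Bsub G B a" "{} \<notin> F'"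
      and dir: "\<forall>x\<in>F'. \<forall>y\<in>F'. \<exists>u\<in>F'. u \<subseteq> x \<and> u \<subseteq> y"
      using F'(1) unfolding is_filter_def by auto
    have DB: "D \<in> B" "D \<subseteq> rword G a" using D FP(1) Bsub_iff[OF ls] by auto
    have meet: "\<forall>A\<in>Y. rset G D x \<inter> A \<noteq> {}"
    proof (intro ballI notI)
      fix A assume A: "A \<in> Y" and emp: "rset G D x \<inter> A = {}"
      have As: "Some (a @ x, A, a @ x) \<in> \<xi>" using A unfolding Y_def by simp
      have A': "Some (a @ x, rset G E x \<inter> A, a @ x) \<in> \<xi>" using lemK[OF ls wlr filt EB(2) As] .
      have EU: "E = (E \<inter> D) \<union> (E - D)" by auto
      have "rset G E x = rset G (E \<inter> D) x \<union> rset G (E - D) x" using rset_Un[of G "E \<inter> D" "E - D" x] EU by simp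
      moreover have "rset G (E \<inter> D) x \<subseteq> rset G D x" using rset_mono[of "E \<inter> D" D G x] by simp
      ultimately have sub: "rset G E x \<inter> A \<subseteq> rset G (E - D) x" using emp by blast
      have EDB: "E - D \<in> B" using crc EB(1) DB(1) unfolding closed_rel_compl_def by blast
      have "E - D \<in> Bsub G B a" using EDB Ea Bsub_iff[OF ls] by blast
      then have "Some (a, E - D, a) \<in> \<xi>" using lemU[OF ls filt A' _ sub] by simp
      then have "E - D \<in> X" using EDB unfolding X_def by simp
      then have ED: "E - D \<in> F'" using F'(2) by blast
      obtain u where "u \<in> F'" "u \<subseteq> D" "u \<subseteq> E - D" using dir D ED by blast
      then have "u = {}" "u \<in> F'" by auto
      then show False using FP(2) by simp
    qed
    have rB: "rset G D x \<in> B" using rset_B[OF ls DB(1) xL] .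
    have "rset G D x \<subseteq> rset G (rword G a) x" using rset_mono[OF DB(2)] .
    then have "rset G D x \<subseteq> rword G (a @ x)" using rword_append[of G a x] by simp
    then have rS: "rset G D x \<in> Bsub G B (a @ x)" using rB Bsub_iff[OF ls] by blast
    have "rset G D x \<in> Y" using UF[OF ufY rS Bsub_Int[OF ls] meet] .
    then have "Some (a @ x, rset G D x, a @ x) \<in> \<xi>" unfolding Y_def by simp
    then have "Some (a, D, a) \<in> \<xi>" using lemU[OF ls filt _ _ subset_refl] FP(1) D by blast
    then show "D \<in> X" unfolding X_def using DB(1) by simp
  qed
  have "is_ultrafilter (Bsub G B a) (\<subseteq>) {} X"
    unfolding is_ultrafilter_def using fX max by blast
  then show ?thesis unfolding X_def .
qed

lemma wprefix_take: "m \<le> n \<Longrightarrow> take m (wprefix \<alpha> n) = wprefix \<alpha> m"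
  by (cases \<alpha>) (auto simp: take_map min_def)

lemma wprefix_len: "enat m \<le> wlen \<alpha> \<Longrightarrow> length (wprefix \<alpha> m) = m"
  by (cases \<alpha>) auto

theorem mainTheorem13:
  fixes G :: "('v,'e,'a) lgraph" and B :: "'v set set"
    and \<xi> :: "('v,'a) selt set" and \<alpha> :: "'a lword" and n :: nat
  assumes "labelled_space G B"
    and "weakly_left_resolving G B"
    and "closed_rel_compl B"
    and "filter_ES G B \<xi>"
    and "is_word_of G \<xi> \<alpha>"
    and "0 < n" and "enat n \<le> wlen \<alpha>"
    and "ultrafilter_B G B (wprefix \<alpha> n) (xi_n G B \<xi> \<alpha> n)"
  shows "(\<forall>m. 0 < m \<and> m < n \<longrightarrow> ultrafilter_B G B (wprefix \<alpha> m) (xi_n G B \<xi> \<alpha> m))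
       \<and> (xi_n G B \<xi> \<alpha> 0 \<noteq> {} \<longrightarrow> ultrafilter_B G B [] (xi_n G B \<xi> \<alpha> 0))"
proof -
  note ls = assms(1) and wlr = assms(2) and crc = assms(3) and filt = assms(4)
  have gen: "ultrafilter_B G B (wprefix \<alpha> m) (xi_n G B \<xi> \<alpha> m)"
    if m: "m < n" and ne: "xi_n G B \<xi> \<alpha> m \<noteq> {}" for m
  proof -
    define a where "a = wprefix \<alpha> m"
    define x where "x = drop m (wprefix \<alpha> n)"
    have ax: "wprefix \<alpha> n = a @ x" unfolding a_def x_def
      using append_take_drop_id[of m "wprefix \<alpha> n"] wprefix_take[of m n \<alpha>] m by simp
    have uf: "is_ultrafilter (Bsub G B (a @ x)) (\<subseteq>) {} {A \<in> B. Some (a @ x, A, a @ x) \<in> \<xi>}"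
      using assms(8) ax unfolding ultrafilter_B_def xi_n_def by simp
    have ne': "{A \<in> B. Some (a, A, a) \<in> \<xi>} \<noteq> {}" using ne unfolding xi_n_def a_def by simp
    show ?thesis using core[OF ls wlr crc filt uf ne'] unfolding ultrafilter_B_def xi_n_def a_def .
  qed
  have part1: "ultrafilter_B G B (wprefix \<alpha> m) (xi_n G B \<xi> \<alpha> m)" if m: "0 < m" "m < n" for m
  proof -
    define a where "a = wprefix \<alpha> m"
    define x where "x = drop m (wprefix \<alpha> n)"
    have ax: "wprefix \<alpha> n = a @ x" unfolding a_def x_def
      using append_take_drop_id[of m "wprefix \<alpha> n"] wprefix_take[of m n \<alpha>] m by simp
    have fY: "is_filter (Bsub G B (a @ x)) (\<subseteq>) {} (xi_n G B \<xi> \<alpha> n)"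
      using assms(8) ax unfolding ultrafilter_B_def is_ultrafilter_def by simp
    obtain A where A: "A \<in> xi_n G B \<xi> \<alpha> n" using fY unfolding is_filter_def by auto
    have As: "Some (a @ x, A, a @ x) \<in> \<xi>" using A ax unfolding xi_n_def by simp
    have h: "a @ x \<in> Lstar G" "A \<in> Bsub G B (a @ x)" using elemS[OF filt As] by auto
    have "enat m \<le> enat n" using m by simp
    then have "enat m \<le> wlen \<alpha>" using assms(7) by (rule order_trans)
    then have "length a = m" unfolding a_def by (rule wprefix_len)
    then have "a \<noteq> []" using m by auto
    then have aP: "a \<in> Lplus G" using Lstar_split[OF h(1)] unfolding Lstar_def by simp
    have rB: "rword G a \<in> B" using rword_B[OF ls aP] .
    have rS: "rword G a \<in> Bsub G B a" using rB Bsub_iff[OF ls] by blast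
    have "A \<subseteq> rset G (rword G a) x" using h(2) Bsub_iff[OF ls] rword_append[of G a x] by simp
    then have "Some (a, rword G a, a) \<in> \<xi>" using lemU[OF ls filt As rS] by simp
    then have "rword G a \<in> xi_n G B \<xi> \<alpha> m" using rB unfolding xi_n_def a_def by simp
    then have "xi_n G B \<xi> \<alpha> m \<noteq> {}" by auto
    then show ?thesis by (rule gen[OF m(2)])
  qed
  have w0: "wprefix \<alpha> 0 = []" by (cases \<alpha>) auto
  have part2: "ultrafilter_B G B [] (xi_n G B \<xi> \<alpha> 0)" if "xi_n G B \<xi> \<alpha> 0 \<noteq> {}"
    using gen[OF assms(6) that] w0 by simp
  show ?thesis
  proof (intro conjI allI impI)
    fix m assume "0 < m \<and> m < n" then show "ultrafilter_B G B (wprefix \<alpha> m) (xi_n G B \<xi> \<alpha> m)"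
      using part1 by simp
  next
    assume "xi_n G B \<xi> \<alpha> 0 \<noteq> {}" then show "ultrafilter_B G B [] (xi_n G B \<xi> \<alpha> 0)" by (rule part2)
  qed
qed


end
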